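(* Let $n\ge 2$, $0\le d\le n-1$, and let $\mathbf{P}=(P_1,\dots,P_{n+1})$ be a Roy-system of dimension $n+1$ on $[Q_0,\infty)$. Then \[\underline{\delta}(\mathbf{P})\le d+(n+1)\liminf_{q\to\infty}\frac{P_1(q)+\cdots+P_{n-d}(q)}{q}.\]
   Context: A Roy-system of dimension $n+1$ on an interval $I\subset[0,\infty)$ with nonempty interior is a continuous piecewise linear map $\mathbf{P}=(P_1,\dots,P_{n+1}):I\to\mathbb{R}^{n+1}$ such that: (S1) for each $q\in I$, $0\le P_1(q)\le\cdots\le P_{n+1}(q)$ and $P_1(q)+\cdots+P_{n+1}(q)=q$; (S2) on every nonempty open subinterval $H$ of $I$ where $\mathbf{P}$ is differentiable, there are integers $1\le\underline r\le\bar r\le n+1$ such that $P_{\underline r},\dots,P_{\bar r}$ coincide on $H$ and have slope $1/(\bar r-\underline r+1)$, while every other component is constant on $H$; (S3) if $q$ is an interior point of $I$ where $\mathbf{P}$ is not differentiable, and $\underline r,\bar r,\underline s,\bar s$ are the integers with $P_j'(q^-)=1/(\bar r-\underline r+1)$ for $\underline r\le j\le\bar r$ and $P_j'(q^+)=1/(\bar s-\underline s+1)$ for $\underline s\le j\le\bar s$, and if $\underline r<\bar s$, then $P_{\underline r}(q)=P_{\underline r+1}(q)=\cdots=P_{\bar s}(q)$. The local contraction rate at a point $q$ where $\mathbf{P}$ is differentiable is $\delta(\mathbf{P},q)=n+1-\kappa$, where $\kappa=\min\{k:P_k'(q)>0\}$. The average contraction rate is $\Delta(\mathbf{P},Q)=\frac{1}{Q-Q_0}\int_{Q_0}^{Q}\delta(\mathbf{P},q)\,dq$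 for $Q>Q_0$, and the lower average contraction rate is $\underline{\delta}(\mathbf{P})=\liminf_{Q\to\infty}\Delta(\mathbf{P},Q)$. *)

theory Defs
  imports "HOL-Analysis.Analysis"
begin

text \<open>A map P : [Q0,oo) -> R^(n+1) is represented as P :: real => nat => real,
  the components being P q 1, ..., P q (n+1).\<close>

definition piecewise_linear_on :: "real \<Rightarrow> nat \<Rightarrow> (real \<Rightarrow> nat \<Rightarrow> real) \<Rightarrow> bool" where
  "piecewise_linear_on Q0 n P \<longleftrightarrow>
     (\<forall>a b. Q0 \<le> a \<and> a < b \<longrightarrow>
        (\<exists>(t::nat \<Rightarrow> real) k. t 0 = a \<and> t k = b \<and> (\<forall>i<k. t i < t (Suc i)) \<and>
           (\<forall>i<k. \<forall>j\<in>{1..n+1}. \<exists>\<alpha> \<beta>. \<forall>x\<in>{t i..t (Suc i)}. P x j = \<alpha> * x + \<beta>)))"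

definition diff_at :: "nat \<Rightarrow> (real \<Rightarrow> nat \<Rightarrow> real) \<Rightarrow> real \<Rightarrow> bool" where
  "diff_at n P q \<longleftrightarrow> (\<forall>j\<in>{1..n+1}. (\<lambda>t. P t j) differentiable (at q))"

definition roy_system :: "nat \<Rightarrow> real \<Rightarrow> (real \<Rightarrow> nat \<Rightarrow> real) \<Rightarrow> bool" where
  "roy_system n Q0 P \<longleftrightarrow>
     Q0 \<ge> 0 \<and>
     (\<forall>j\<in>{1..n+1}. continuous_on {Q0..} (\<lambda>q. P q j)) \<and>
     piecewise_linear_on Q0 n P \<and>
     \<comment> \<open>(S1)\<close>
     (\<forall>q\<ge>Q0. 0 \<le> P q 1 \<and> (\<forall>j\<in>{1..n}. P q j \<le> P q (Suc j)) \<and> (\<Sum>j=1..n+1. P q j) = q) \<and>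
     \<comment> \<open>(S2)\<close>
     (\<forall>H. is_interval H \<and> open H \<and> H \<noteq> {} \<and> H \<subseteq> {Q0..} \<and> (\<forall>q\<in>H. diff_at n P q) \<longrightarrow>
        (\<exists>rl rh. 1 \<le> rl \<and> rl \<le> rh \<and> rh \<le> n+1 \<and>
           (\<forall>q\<in>H. \<forall>j\<in>{rl..rh}. P q j = P q rl \<and>
               ((\<lambda>t. P t j) has_real_derivative (1 / real (rh - rl + 1))) (at q)) \<and>
           (\<forall>j\<in>{1..n+1} - {rl..rh}. \<exists>c. \<forall>q\<in>H. P q j = c))) \<and>
     \<comment> \<open>(S3)\<close>
     (\<forall>q>Q0. \<not> diff_at n P q \<longrightarrow>
        (\<forall>rl rh sl sh. 1 \<le> rl \<and> rl \<le> rh \<and> rh \<le> n+1 \<and> 1 \<le> sl \<and> sl \<le> sh \<and> sh \<le> n+1 \<and>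
           (\<forall>j\<in>{1..n+1}. ((\<lambda>t. P t j) has_real_derivative
               (if rl \<le> j \<and> j \<le> rh then 1 / real (rh - rl + 1) else 0)) (at_left q)) \<and>
           (\<forall>j\<in>{1..n+1}. ((\<lambda>t. P t j) has_real_derivative
               (if sl \<le> j \<and> j \<le> sh then 1 / real (sh - sl + 1) else 0)) (at_right q)) \<and>
           rl < sh \<longrightarrow> (\<forall>j\<in>{rl..sh}. P q j = P q rl)))"

text \<open>Local contraction rate; only meaningful where P is differentiable
  (a null set of exceptions, irrelevant for the integral), set to 0 elsewhere.\<close>
definition local_contraction :: "nat \<Rightarrow> (real \<Rightarrow> nat \<Rightarrow> real) \<Rightarrow> real \<Rightarrow> real" where
  "local_contraction n P q =
     (if diff_at n P q
      then real (n + 1) - real (LEAST k. 1 \<le> k \<and> k \<le> n+1 \<and> deriv (\<lambda>t. P t k) q > 0)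
      else 0)"

definition avg_contraction :: "nat \<Rightarrow> real \<Rightarrow> (real \<Rightarrow> nat \<Rightarrow> real) \<Rightarrow> real \<Rightarrow> real" where
  "avg_contraction n Q0 P Q = integral {Q0..Q} (local_contraction n P) / (Q - Q0)"

definition lower_avg_contraction :: "nat \<Rightarrow> real \<Rightarrow> (real \<Rightarrow> nat \<Rightarrow> real) \<Rightarrow> ereal" where
  "lower_avg_contraction n Q0 P = Liminf at_top (\<lambda>Q. ereal (avg_contraction n Q0 P Q))"

end

theory Submission
  imports Defs
begin

lemma P_mono1:
  assumes R: "roy_system n Q0 P" and q: "q \<ge> Q0"
  shows "1 \<le> j \<Longrightarrow> j \<le> n+1 \<Longrightarrow> P q 1 \<le> P q j"
proof (induction j)
  case 0 then show ?case by simp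
next
  case (Suc j)
  show ?case
  proof (cases "j = 0")
    case True then show ?thesis by simp
  next
    case False
    have "P q j \<le> P q (Suc j)" using R q False Suc.prems unfolding roy_system_def by auto
    with Suc False show ?thesis by auto
  qed
qed

lemma P_nonneg:
  assumes R: "roy_system n Q0 P" and q: "q \<ge> Q0" and j: "j \<in> {1..n+1}"
  shows "0 \<le> P q j"
proof -
  have "0 \<le> P q 1" using R q unfolding roy_system_def by auto
  also have "\<dots> \<le> P q j" using P_mono1[OF R q] j by auto
  finally show ?thesis .
qed

lemma S_bounds:
  assumes R: "roy_system n Q0 P" and q: "q \<ge> Q0" and d: "d \<le> n - 1"
  shows "0 \<le> (\<Sum>j=1..n-d. P q j)" "(\<Sum>j=1..n-d. P q j) \<le> q"
proof -
  show "0 \<le> (\<Sum>j=1..n-d. P q j)"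
    by (rule sum_nonneg) (use P_nonneg[OF R q] in auto)
  have "(\<Sum>j=1..n-d. P q j) \<le> (\<Sum>j=1..n+1. P q j)"
    by (rule sum_mono2) (use P_nonneg[OF R q] in auto)
  also have "\<dots> = q" using R q unfolding roy_system_def by auto
  finally show "(\<Sum>j=1..n-d. P q j) \<le> q" .
qed

lemma key_ineq:
  fixes n d rl rh :: nat
  assumes "1 \<le> rl" "rl \<le> rh" "rh \<le> n+1"
  shows "real (n+1) - real rl - real d \<le>
     real (n+1) * (\<Sum>j=1..n-d. (if rl \<le> j \<and> j \<le> rh then 1 / real (rh - rl + 1) else 0))"
proof -
  have eq: "(\<Sum>j=1..n-d. (if rl \<le> j \<and> j \<le> rh then 1 / real (rh - rl + 1) else 0))
      = real (card ({1..n-d} \<inter> {rl..rh})) / real (rh - rl + 1)"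
    using assms by (simp add: sum.If_cases Int_def of_nat_diff)
  show ?thesis
  proof (cases "rl \<le> n - d")
    case False
    then show ?thesis by (simp add: eq)
  next
    case True
    have "{1..n-d} \<inter> {rl..rh} = {rl..min (n-d) rh}" using assms True by auto
    then have c: "card ({1..n-d} \<inter> {rl..rh}) = min (n-d) rh + 1 - rl" using assms by (simp add: max_def)
    have pos: "real (rh - rl + 1) > 0" by simp
    show ?thesis
    proof (cases "rh \<le> n - d")
      case True
      then have "card ({1..n-d} \<inter> {rl..rh}) = rh - rl + 1" using c assms by simp
      then have "real (card ({1..n-d} \<inter> {rl..rh})) / real (rh - rl + 1) = 1" using pos by simp
      then have r1: "(\<Sum>j=1..n-d. (if rl \<le> j \<and> j \<le> rh then 1 / real (rh - rl + 1) else 0)) = 1"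
        by (rule trans[OF eq])
      show ?thesis unfolding r1 using assms by simp
    next
      case False
      then have cc: "card ({1..n-d} \<inter> {rl..rh}) = n - d + 1 - rl" using c by simp
      have "real (n+1) - real rl - real d = real (n - d + 1 - rl)" using True assms by linarith
      also have "\<dots> \<le> real (n+1) * (real (n - d + 1 - rl) / real (rh - rl + 1))"
      proof -
        have "real (rh - rl + 1) \<le> real (n+1)" using assms by simp
        then have "real (n - d + 1 - rl) * real (rh - rl + 1) \<le> real (n+1) * real (n - d + 1 - rl)"
          by (metis mult.commute mult_right_mono of_nat_0_le_iff)
        then show ?thesis using pos by (simp add: field_simps)
      qed
      finally show ?thesis unfolding eq cc .
    qed
  qed
qed

lemma piece:
  fixes d :: nat
  assumes R: "roy_system n Q0 P" and ab: "Q0 \<le> a" "a < b"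
    and lin: "\<forall>j\<in>{1..n+1}. \<exists>\<alpha> \<beta>. \<forall>x\<in>{a..b}. P x j = \<alpha>*x+\<beta>"
  shows "\<exists>I. (local_contraction n P has_integral I) {a..b} \<and>
     I \<le> real d*(b-a) + real (n+1)*((\<Sum>j=1..n-d. P b j) - (\<Sum>j=1..n-d. P a j))"
proof -
  obtain \<alpha> \<beta> where L: "\<And>j x. j\<in>{1..n+1} \<Longrightarrow> x\<in>{a..b} \<Longrightarrow> P x j = \<alpha> j*x+\<beta> j"
    using lin by metis
  define H where "H = {a<..<b}"
  have Hopen: "open H" unfolding H_def by simp
  have der: "((\<lambda>t. P t j) has_real_derivative \<alpha> j) (at x)" if j: "j\<in>{1..n+1}" and x: "x\<in>H" for j x
  proof -
    have "((\<lambda>t. \<alpha> j*t+\<beta> j) has_real_derivative \<alpha> j) (at x)"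
      by (auto intro!: derivative_eq_intros)
    then show ?thesis
      by (rule has_field_derivative_transform_within_open[where S=H]) (use x L j in \<open>auto simp: H_def\<close>)
  qed
  have dH: "diff_at n P x" if "x\<in>H" for x
    unfolding diff_at_def using der that real_differentiable_def by blast
  have isint: "is_interval H" unfolding H_def is_interval_1 by auto
  have Hne: "H \<noteq> {}" unfolding H_def using ab by auto
  have Hsub: "H \<subseteq> {Q0..}" unfolding H_def using ab by auto
  have S2: "\<forall>H. is_interval H \<and> open H \<and> H \<noteq> {} \<and> H \<subseteq> {Q0..} \<and> (\<forall>q\<in>H. diff_at n P q) \<longrightarrow>
        (\<exists>rl rh. 1 \<le> rl \<and> rl \<le> rh \<and> rh \<le> n+1 \<and>
           (\<forall>q\<in>H. \<forall>j\<in>{rl..rh}. P q j = P q rl \<and>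
               ((\<lambda>t. P t j) has_real_derivative (1 / real (rh - rl + 1))) (at q)) \<and>
           (\<forall>j\<in>{1..n+1} - {rl..rh}. \<exists>c. \<forall>q\<in>H. P q j = c))"
    using R unfolding roy_system_def by blast
  obtain rl rh where rr: "1 \<le> rl" "rl \<le> rh" "rh \<le> n+1"
    and D: "\<forall>q\<in>H. \<forall>j\<in>{rl..rh}. P q j = P q rl \<and>
               ((\<lambda>t. P t j) has_real_derivative (1 / real (rh - rl + 1))) (at q)"
    and C: "\<forall>j\<in>{1..n+1} - {rl..rh}. \<exists>c. \<forall>q\<in>H. P q j = c"
    using S2[rule_format, of H] isint Hopen Hne Hsub dH by blast
  define m where "m = (a+b)/2"
  have mH: "m \<in> H" unfolding m_def H_def using ab by auto
  have alpha: "\<alpha> j = (if rl \<le> j \<and> j \<le> rh then 1/real(rh-rl+1) else 0)" if j: "j\<in>{1..n+1}" for j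
  proof (cases "rl \<le> j \<and> j \<le> rh")
    case True
    then show ?thesis using DERIV_unique[OF der[OF j mH]] D mH by auto
  next
    case False
    have "j \<in> {1..n+1} - {rl..rh}" using False j by auto
    then obtain c where c: "\<forall>q\<in>H. P q j = c" using C by blast
    have "((\<lambda>t. c) has_real_derivative 0) (at m)" by simp
    then have "((\<lambda>t. P t j) has_real_derivative 0) (at m)"
      by (rule has_field_derivative_transform_within_open[where S=H]) (use mH c Hopen in auto)
    then show ?thesis using DERIV_unique[OF der[OF j mH]] False by auto
  qed
  define c where "c = real (n+1) - real rl"
  have lc: "local_contraction n P x = c" if x: "x\<in>H" for x
  proof -
    have dv: "deriv (\<lambda>t. P t k) x = \<alpha> k" if "k\<in>{1..n+1}" for k
      using DERIV_imp_deriv der x that by blast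
    have "(LEAST k. 1 \<le> k \<and> k \<le> n+1 \<and> deriv (\<lambda>t. P t k) x > 0) = rl"
    proof (rule Least_equality)
      show "1 \<le> rl \<and> rl \<le> n+1 \<and> deriv (\<lambda>t. P t rl) x > 0"
        using dv[of rl] alpha[of rl] rr by simp
      fix y assume y: "1 \<le> y \<and> y \<le> n+1 \<and> deriv (\<lambda>t. P t y) x > 0"
      then show "rl \<le> y" using dv[of y] alpha[of y] by (auto split: if_splits)
    qed
    then show ?thesis unfolding local_contraction_def c_def using dH x by simp
  qed
  have int: "(local_contraction n P has_integral c*(b-a)) {a..b}"
  proof (rule has_integral_spike_finite[where S="{a,b}" and f="\<lambda>x. c"])
    show "finite {a,b}" by simp
    show "local_contraction n P x = c" if "x \<in> {a..b} - {a,b}" for x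
      using lc that H_def by auto
    show "((\<lambda>x. c) has_integral c*(b-a)) {a..b}"
      using has_integral_const_real[of c a b] ab by (simp add: mult.commute)
  qed
  have dj: "P b j - P a j = (b-a) * \<alpha> j" if "j\<in>{1..n-d}" for j
    using L[of j a] L[of j b] ab that by (auto simp: algebra_simps)
  have Sdiff: "(\<Sum>j=1..n-d. P b j) - (\<Sum>j=1..n-d. P a j) = (b-a) * (\<Sum>j=1..n-d. \<alpha> j)"
    by (simp add: sum_subtractf[symmetric] sum_distrib_left dj)
  have "(\<Sum>j=1..n-d. \<alpha> j) = (\<Sum>j=1..n-d. (if rl \<le> j \<and> j \<le> rh then 1/real(rh-rl+1) else 0))"
    by (rule sum.cong) (auto simp: alpha)
  with key_ineq[OF rr, of d] have K: "c - real d \<le> real (n+1) * (\<Sum>j=1..n-d. \<alpha> j)"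
    unfolding c_def by simp
  have "c*(b-a) \<le> real d*(b-a) + real (n+1)*((b-a) * (\<Sum>j=1..n-d. \<alpha> j))"
  proof -
    have "(c - real d) * (b-a) \<le> (real (n+1) * (\<Sum>j=1..n-d. \<alpha> j)) * (b-a)"
      using K ab by (intro mult_right_mono) auto
    then show ?thesis by (simp add: algebra_simps)
  qed
  then show ?thesis using int Sdiff by auto
qed


lemma interval_bound:
  fixes d :: nat
  assumes R: "roy_system n Q0 P" and Q: "Q0 < Q"
  shows "integral {Q0..Q} (local_contraction n P)
     \<le> real d*(Q-Q0) + real (n+1)*((\<Sum>j=1..n-d. P Q j) - (\<Sum>j=1..n-d. P Q0 j))"
proof -
  have PL: "piecewise_linear_on Q0 n P" using R unfolding roy_system_def by blast
  obtain t :: "nat \<Rightarrow> real" and k where t0: "t 0 = Q0" and tk: "t k = Q"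
    and inc: "\<forall>i<k. t i < t (Suc i)"
    and lin: "\<forall>i<k. \<forall>j\<in>{1..n+1}. \<exists>\<alpha> \<beta>. \<forall>x\<in>{t i..t (Suc i)}. P x j = \<alpha> * x + \<beta>"
    using PL Q unfolding piecewise_linear_on_def by (meson order_refl)
  have claim: "t 0 \<le> t m \<and> (\<exists>I. (local_contraction n P has_integral I) {t 0..t m} \<and>
      I \<le> real d*(t m - t 0) + real (n+1)*((\<Sum>j=1..n-d. P (t m) j) - (\<Sum>j=1..n-d. P (t 0) j)))"
    if "m \<le> k" for m
    using that
  proof (induction m)
    case 0
    have "(local_contraction n P has_integral 0) {t 0..t 0}" using has_integral_refl(2) by simp
    then show ?case by auto
  next
    case (Suc m)
    then have mk: "m < k" by simp
    from Suc.IH mk obtain I where le: "t 0 \<le> t m" and I: "(local_contraction n P has_integral I) {t 0..t m}"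
      and Ib: "I \<le> real d*(t m - t 0) + real (n+1)*((\<Sum>j=1..n-d. P (t m) j) - (\<Sum>j=1..n-d. P (t 0) j))"
      by auto
    have lt: "t m < t (Suc m)" using inc mk by auto
    obtain J where J: "(local_contraction n P has_integral J) {t m..t (Suc m)}"
      and Jb: "J \<le> real d*(t (Suc m) - t m) + real (n+1)*((\<Sum>j=1..n-d. P (t (Suc m)) j) - (\<Sum>j=1..n-d. P (t m) j))"
      using piece[OF R _ lt, of d] le t0 lin mk by auto
    have "(local_contraction n P has_integral I + J) {t 0..t (Suc m)}"
      by (rule has_integral_combine[OF le _ I J]) (use lt in simp)
    moreover have "I + J \<le> real d*(t (Suc m) - t 0) + real (n+1)*((\<Sum>j=1..n-d. P (t (Suc m)) j) - (\<Sum>j=1..n-d. P (t 0) j))"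
      using Ib Jb by (simp add: algebra_simps)
    ultimately show ?case using le lt by auto
  qed
  from claim[OF order_refl] obtain I where I: "(local_contraction n P has_integral I) {t 0..t k}"
      and Ib: "I \<le> real d*(t k - t 0) + real (n+1)*((\<Sum>j=1..n-d. P (t k) j) - (\<Sum>j=1..n-d. P (t 0) j))"
    by auto
  show ?thesis using integral_unique[OF I] Ib t0 tk by simp
qed

theorem mainTheorem7:
  fixes n d :: nat and Q0 :: real and P :: "real \<Rightarrow> nat \<Rightarrow> real"
  assumes "n \<ge> 2" and "d \<le> n - 1" and "roy_system n Q0 P"
  shows "lower_avg_contraction n Q0 P
           \<le> ereal (real d) + ereal (real (n + 1)) *
              Liminf at_top (\<lambda>q. ereal ((\<Sum>j=1..n-d. P q j) / q))"
proof -
  note R = assms(3)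
  have Q0: "Q0 \<ge> 0" using R unfolding roy_system_def by blast
  define S where "S q = (\<Sum>j=1..n-d. P q j)" for q
  define g where "g q = S q / q" for q
  have bnd: "avg_contraction n Q0 P Q \<le> real d + real (n+1) * g Q + e"
    if e: "e > 0" and Qb: "Q \<ge> Q0 + real (n+1) * Q0 / e + 1" for e Q
  proof -
    have QQ: "Q0 < Q" using Qb Q0 e by (smt (verit) divide_nonneg_pos of_nat_0_le_iff mult_nonneg_nonneg)
    have Qp: "Q > 0" using QQ Q0 by linarith
    have S0: "0 \<le> S Q0" "S Q \<le> Q" unfolding S_def using S_bounds[OF R _ assms(2)] QQ by auto
    have "avg_contraction n Q0 P Q = integral {Q0..Q} (local_contraction n P) / (Q - Q0)"
      unfolding avg_contraction_def by simp
    also have "\<dots> \<le> (real d*(Q-Q0) + real (n+1)*(S Q - S Q0)) / (Q - Q0)"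
      using interval_bound[OF R QQ, of d] QQ unfolding S_def by (simp add: divide_right_mono)
    also have "\<dots> = real d + real (n+1) * ((S Q - S Q0) / (Q - Q0))"
      using QQ by (simp add: field_simps)
    also have "\<dots> \<le> real d + real (n+1) * (g Q + Q0 / (Q - Q0))"
    proof -
      have nz: "Q - Q0 \<noteq> 0" "Q \<noteq> 0" using QQ Qp by auto
      have "S Q * Q0 \<le> Q * Q0" using S0 Q0 by (intro mult_right_mono) auto
      then have a1: "S Q * Q0 / Q \<le> Q0" using Qp by (simp add: pos_divide_le_eq mult.commute)
      have a2: "(S Q / Q + Q0 / (Q - Q0)) * (Q - Q0) = S Q - S Q * Q0 / Q + Q0"
        using nz by (simp add: field_simps)
      have "S Q - S Q0 \<le> (S Q / Q + Q0 / (Q - Q0)) * (Q - Q0)" using a1 a2 S0 by linarith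
      then have "(S Q - S Q0) / (Q - Q0) \<le> S Q / Q + Q0 / (Q - Q0)"
        using QQ by (simp add: pos_divide_le_eq)
      then show ?thesis unfolding g_def by (intro add_left_mono mult_left_mono) auto
    qed
    also have "\<dots> \<le> real d + real (n+1) * g Q + e"
    proof -
      have "real (n+1) * Q0 / e \<le> Q - Q0" using Qb by linarith
      then have "real (n+1) * Q0 \<le> e * (Q - Q0)" using e by (simp add: field_simps)
      then have "real (n+1) * (Q0 / (Q - Q0)) \<le> e" using QQ by (simp add: field_simps)
      then show ?thesis by (simp add: algebra_simps)
    qed
    finally show ?thesis .
  qed
  have nb: "(at_top :: real filter) \<noteq> bot" by simp
  have "lower_avg_contraction n Q0 P \<le> ereal (real d) + ereal (real (n + 1)) * Liminf at_top (\<lambda>q. ereal (g q))"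
  proof (rule ereal_le_epsilon2)
    fix e :: real assume e: "0 < e"
    have ev: "eventually (\<lambda>Q. ereal (avg_contraction n Q0 P Q)
        \<le> (ereal (real d) + ereal (real (n+1)) * ereal (g Q)) + ereal e) at_top"
      using eventually_ge_at_top[of "Q0 + real (n+1) * Q0 / e + 1"]
      by eventually_elim (use bnd e in simp)
    have "lower_avg_contraction n Q0 P \<le> Liminf at_top (\<lambda>Q. (ereal (real d) + ereal (real (n+1)) * ereal (g Q)) + ereal e)"
      unfolding lower_avg_contraction_def by (rule Liminf_mono[OF ev])
    also have "\<dots> = (ereal (real d) + ereal (real (n+1)) * Liminf at_top (\<lambda>q. ereal (g q))) + ereal e"
    proof -
      have l1: "Liminf at_top (\<lambda>Q. (ereal (real d) + ereal (real (n+1)) * ereal (g Q)) + ereal e)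
          = Liminf at_top (\<lambda>Q. ereal (real d) + ereal (real (n+1)) * ereal (g Q)) + ereal e"
        by (rule Liminf_add_ereal_right[OF nb]) simp
      have l2: "Liminf at_top (\<lambda>Q. ereal (real d) + ereal (real (n+1)) * ereal (g Q))
          = ereal (real d) + Liminf at_top (\<lambda>Q. ereal (real (n+1)) * ereal (g Q))"
        by (rule Liminf_add_ereal_left[OF nb]) simp
      have l3: "Liminf at_top (\<lambda>Q. ereal (real (n+1)) * ereal (g Q))
          = ereal (real (n+1)) * Liminf at_top (\<lambda>Q. ereal (g Q))"
        by (rule Liminf_ereal_mult_left[OF nb]) simp
      show ?thesis unfolding l1 l2 l3 ..
    qed
    finally show "lower_avg_contraction n Q0 P \<le> ereal (real d) + ereal (real (n + 1)) * Liminf at_top (\<lambda>q. ereal (g q)) + ereal e" .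
  qed
  then show ?thesis unfolding g_def S_def .
qed

end
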